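(* Let $C=\mathtt{while}(\varphi)\{C_{\mathrm{body}}\}[I]$ be a $\mathsf{pGCL}$ loop with loop-free body $C_{\mathrm{body}}$, and let $f\in\mathbb{E}$. If (1) $[\varphi]\cdot\mathrm{awp}[\![C_{\mathrm{body}}]\!](I)+[\neg\varphi]\cdot f\ge I$, and (2) $C$ is dPAST, and (3) $C$ is suitable for optional stopping w.r.t. $f$, then $\mathrm{awp}[\![C]\!](f)\ge I$.
   Context: States: fix a countably infinite set of program variables with values in $\mathbb{Q}_{\ge 0}$; a state is a map $\sigma$ from variables to $\mathbb{Q}_{\ge0}$ which is $0$ for all but finitely many variables; $\mathsf{States}$ is the set of states. A predicate is a map $\varphi:\mathsf{States}\to\{\mathsf{true},\mathsf{false}\}$. Expectations: $\mathbb{E}$ is the set of maps $\mathsf{States}\to[0,\infty]$, ordered pointwise ($\le,\ge$); $+,\cdot$ pointwise with $0\cdot\infty=0$; $\sqcap,\sqcup$ pointwise min/max; $[\varphi]$ Iverson bracket; $(\varphi\to g)(\sigma)=g(\sigma)$ if $\sigma\models\varphi$, else $\infty$; $f[x/E](\sigma)=f(\sigma[x\mapsto E(\sigma)])$. Programs of $\mathsf{pGCL}$: $C ::= \mathtt{skip} \mid x:=E \mid C;C \mid \mathtt{if}\ \varphi_1\to C\ \square\ \varphi_2\to C \mid \{C\}[p]\{C\} \mid \mathtt{while}(\varphi)\{C\}[I]$, where $E:\mathsf{States}\to\mathbb{Q}_{\ge0}$, $p:\mathsf{States}\to[0,1]$, in every guarded choice $\varphi_1\vee\varphi_2$ is valid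 (when both hold the choice is nondeterministic), and every loop carries an invariant annotation $I\in\mathbb{E}$. Weakest preexpectations for $\mathcal{T}\in\{\mathrm{dwp},\mathrm{awp}\}$: $\mathcal{T}[\![\mathtt{skip}]\!](f)=f$; $\mathcal{T}[\![x:=E]\!](f)=f[x/E]$; $\mathcal{T}[\![C_1;C_2]\!](f)=\mathcal{T}[\![C_1]\!](\mathcal{T}[\![C_2]\!](f))$; $\mathrm{dwp}$ of a guarded choice: $(\varphi_1\to\mathrm{dwp}[\![C_1]\!](f))\sqcap(\varphi_2\to\mathrm{dwp}[\![C_2]\!](f))$; $\mathrm{awp}$ of a guarded choice: $[\varphi_1]\cdot\mathrm{awp}[\![C_1]\!](f)\sqcup[\varphi_2]\cdot\mathrm{awp}[\![C_2]\!](f)$; $\mathcal{T}[\![\{C_1\}[p]\{C_2\}]\!](f)=p\cdot\mathcal{T}[\![C_1]\!](f)+(1-p)\cdot\mathcal{T}[\![C_2]\!](f)$; loops: least fixpoint of $g\mapsto[\neg\varphi]\cdot f+[\varphi]\cdot\mathcal{T}[\![C']\!](g)$. $C$ is dPAST (positively demonically almost-surely terminating) if its expected runtime (in the sense of the expected-runtime calculus of Kaminski et al., resolving nondeterminism in the worst case) is finite for all initial states. A loop $\mathtt{while}(\varphi)\{C_{\mathrm{body}}\}[I]$ is suitable for optional stopping w.r.t. $f$ if (i) $I=[\varphi]\cdot I'+[\neg\varphi]\cdot f$ for some $I'\in\mathbb{E}$, (ii) $f$, $I$ and $[\varphi]\cdot\mathrm{awp}[\![C_{\mathrm{body}}]\!](I)+[\neg\varphi]\cdot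 f$ are all pointwise $<\infty$, and (iii) there is $b\in\mathbb{R}_{\ge0}$ such that for all states $\sigma$, $([\varphi]\cdot\mathrm{awp}[\![C_{\mathrm{body}}]\!](\lambda\tau.|I(\tau)-I(\sigma)|))(\sigma)\le b$. *)

theory Defs
  imports Complex_Main "HOL-Library.Extended_Nonnegative_Real"
begin

typedef state = "{\<sigma> :: nat \<Rightarrow> rat. (\<forall>x. 0 \<le> \<sigma> x) \<and> finite {x. \<sigma> x \<noteq> 0}}"
  by (rule exI[of _ "\<lambda>_. 0"]) simp

type_synonym pred = "state \<Rightarrow> bool"
type_synonym expectation = "state \<Rightarrow> ennreal"

text \<open>State update \<open>\<sigma>[x \<mapsto> v]\<close> (meaningful for \<open>v \<ge> 0\<close>).\<close>
definition upd :: "state \<Rightarrow> nat \<Rightarrow> rat \<Rightarrow> state" where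
  "upd \<sigma> x v = Abs_state ((Rep_state \<sigma>)(x := v))"

definition iv :: "pred \<Rightarrow> expectation" where
  "iv \<phi> = (\<lambda>\<sigma>. if \<phi> \<sigma> then 1 else 0)"

definition guard_to :: "pred \<Rightarrow> expectation \<Rightarrow> expectation" where
  "guard_to \<phi> g = (\<lambda>\<sigma>. if \<phi> \<sigma> then g \<sigma> else \<infinity>)"

definition subst :: "expectation \<Rightarrow> nat \<Rightarrow> (state \<Rightarrow> rat) \<Rightarrow> expectation" where
  "subst f x E = (\<lambda>\<sigma>. f (upd \<sigma> x (E \<sigma>)))"

datatype pgcl =
    Skip
  | Assign nat "state \<Rightarrow> rat"
  | Seq pgcl pgcl
  | GChoice pred pgcl pred pgcl
  | PChoice pgcl "state \<Rightarrow> real" pgcl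
  | While pred pgcl expectation

fun wf :: "pgcl \<Rightarrow> bool" where
  "wf Skip = True"
| "wf (Assign x E) = (\<forall>\<sigma>. 0 \<le> E \<sigma>)"
| "wf (Seq C1 C2) = (wf C1 \<and> wf C2)"
| "wf (GChoice \<phi>1 C1 \<phi>2 C2) = ((\<forall>\<sigma>. \<phi>1 \<sigma> \<or> \<phi>2 \<sigma>) \<and> wf C1 \<and> wf C2)"
| "wf (PChoice C1 p C2) = ((\<forall>\<sigma>. 0 \<le> p \<sigma> \<and> p \<sigma> \<le> 1) \<and> wf C1 \<and> wf C2)"
| "wf (While \<phi> C I) = wf C"

fun loop_free :: "pgcl \<Rightarrow> bool" where
  "loop_free Skip = True"
| "loop_free (Assign x E) = True"
| "loop_free (Seq C1 C2) = (loop_free C1 \<and> loop_free C2)"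
| "loop_free (GChoice \<phi>1 C1 \<phi>2 C2) = (loop_free C1 \<and> loop_free C2)"
| "loop_free (PChoice C1 p C2) = (loop_free C1 \<and> loop_free C2)"
| "loop_free (While \<phi> C I) = False"

primrec dwp :: "pgcl \<Rightarrow> expectation \<Rightarrow> expectation" where
  "dwp Skip f = f"
| "dwp (Assign x E) f = subst f x E"
| "dwp (Seq C1 C2) f = dwp C1 (dwp C2 f)"
| "dwp (GChoice \<phi>1 C1 \<phi>2 C2) f =
     (\<lambda>\<sigma>. min (guard_to \<phi>1 (dwp C1 f) \<sigma>) (guard_to \<phi>2 (dwp C2 f) \<sigma>))"
| "dwp (PChoice C1 p C2) f =
     (\<lambda>\<sigma>. ennreal (p \<sigma>) * dwp C1 f \<sigma> + ennreal (1 - p \<sigma>) * dwp C2 f \<sigma>)"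
| "dwp (While \<phi> C I) f = lfp (\<lambda>g \<sigma>. iv (\<lambda>s. \<not> \<phi> s) \<sigma> * f \<sigma> + iv \<phi> \<sigma> * dwp C g \<sigma>)"

primrec awp :: "pgcl \<Rightarrow> expectation \<Rightarrow> expectation" where
  "awp Skip f = f"
| "awp (Assign x E) f = subst f x E"
| "awp (Seq C1 C2) f = awp C1 (awp C2 f)"
| "awp (GChoice \<phi>1 C1 \<phi>2 C2) f =
     (\<lambda>\<sigma>. max (iv \<phi>1 \<sigma> * awp C1 f \<sigma>) (iv \<phi>2 \<sigma> * awp C2 f \<sigma>))"
| "awp (PChoice C1 p C2) f =
     (\<lambda>\<sigma>. ennreal (p \<sigma>) * awp C1 f \<sigma> + ennreal (1 - p \<sigma>) * awp C2 f \<sigma>)"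
| "awp (While \<phi> C I) f = lfp (\<lambda>g \<sigma>. iv (\<lambda>s. \<not> \<phi> s) \<sigma> * f \<sigma> + iv \<phi> \<sigma> * awp C g \<sigma>)"

primrec ert :: "pgcl \<Rightarrow> expectation \<Rightarrow> expectation" where
  "ert Skip t = (\<lambda>\<sigma>. 1 + t \<sigma>)"
| "ert (Assign x E) t = (\<lambda>\<sigma>. 1 + subst t x E \<sigma>)"
| "ert (Seq C1 C2) t = ert C1 (ert C2 t)"
| "ert (GChoice \<phi>1 C1 \<phi>2 C2) t =
     (\<lambda>\<sigma>. 1 + max (iv \<phi>1 \<sigma> * ert C1 t \<sigma>) (iv \<phi>2 \<sigma> * ert C2 t \<sigma>))"
| "ert (PChoice C1 p C2) t =
     (\<lambda>\<sigma>. 1 + ennreal (p \<sigma>) * ert C1 t \<sigma> + ennreal (1 - p \<sigma>) * ert C2 t \<sigma>)"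
| "ert (While \<phi> C I) t =
     lfp (\<lambda>X \<sigma>. 1 + iv (\<lambda>s. \<not> \<phi> s) \<sigma> * t \<sigma> + iv \<phi> \<sigma> * ert C X \<sigma>)"

definition dPAST :: "pgcl \<Rightarrow> bool" where
  "dPAST C \<longleftrightarrow> (\<forall>\<sigma>. ert C (\<lambda>_. 0) \<sigma> < \<infinity>)"

definition suitable_OST :: "pgcl \<Rightarrow> expectation \<Rightarrow> bool" where
  "suitable_OST C f \<longleftrightarrow> (case C of
     While \<phi> Cb I \<Rightarrow>
       (\<exists>I'. I = (\<lambda>\<sigma>. iv \<phi> \<sigma> * I' \<sigma> + iv (\<lambda>s. \<not> \<phi> s) \<sigma> * f \<sigma>))
     \<and> (\<forall>\<sigma>. f \<sigma> < \<infinity>) \<and> (\<forall>\<sigma>. I \<sigma> < \<infinity>)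
     \<and> (\<forall>\<sigma>. iv \<phi> \<sigma> * awp Cb I \<sigma> + iv (\<lambda>s. \<not> \<phi> s) \<sigma> * f \<sigma> < \<infinity>)
     \<and> (\<exists>b::real. 0 \<le> b \<and> (\<forall>\<sigma>.
          iv \<phi> \<sigma> * awp Cb (\<lambda>\<tau>. ennreal \<bar>enn2real (I \<tau>) - enn2real (I \<sigma>)\<bar>) \<sigma> \<le> ennreal b))
   | _ \<Rightarrow> False)"

end

theory Submission
  imports Defs "HOL-Analysis.Uniform_Limit"
begin

primrec lin :: "pgcl \<Rightarrow> expectation \<Rightarrow> expectation \<Rightarrow> expectation" where
  "lin Skip I g = g"
| "lin (Assign x E) I g = subst g x E"
| "lin (Seq C1 C2) I g = lin C1 (awp C2 I) (lin C2 I g)"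
| "lin (GChoice \<phi>1 C1 \<phi>2 C2) I g = (\<lambda>\<sigma>. if \<phi>1 \<sigma> \<and> (\<phi>2 \<sigma> \<longrightarrow> awp C2 I \<sigma> \<le> awp C1 I \<sigma>)
      then lin C1 I g \<sigma> else lin C2 I g \<sigma>)"
| "lin (PChoice C1 p C2) I g = (\<lambda>\<sigma>. ennreal (p \<sigma>) * lin C1 I g \<sigma> + ennreal (1 - p \<sigma>) * lin C2 I g \<sigma>)"
| "lin (While \<phi> C J) I g = awp (While \<phi> C J) g"

lemma awp_mono: "loop_free Q \<Longrightarrow> (\<And>\<tau>. g \<tau> \<le> h \<tau>) \<Longrightarrow> awp Q g \<sigma> \<le> awp Q h \<sigma>"
proof (induction Q arbitrary: g h \<sigma>)
  case (GChoice x1 C1 x3 C2)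
  have "iv x1 \<sigma> * awp C1 g \<sigma> \<le> iv x1 \<sigma> * awp C1 h \<sigma>"
       "iv x3 \<sigma> * awp C2 g \<sigma> \<le> iv x3 \<sigma> * awp C2 h \<sigma>"
    using GChoice by (auto intro!: mult_left_mono)
  then show ?case by (simp only: awp.simps) (rule max.mono)
next
  case (PChoice C1 x2 C2)
  then show ?case by (auto intro!: add_mono mult_left_mono)
qed (auto simp: subst_def)

lemma ert_mono: "loop_free Q \<Longrightarrow> (\<And>\<tau>. g \<tau> \<le> h \<tau>) \<Longrightarrow> ert Q g \<sigma> \<le> ert Q h \<sigma>"
proof (induction Q arbitrary: g h \<sigma>)
  case (GChoice x1 C1 x3 C2)
  have "iv x1 \<sigma> * ert C1 g \<sigma> \<le> iv x1 \<sigma> * ert C1 h \<sigma>"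
       "iv x3 \<sigma> * ert C2 g \<sigma> \<le> iv x3 \<sigma> * ert C2 h \<sigma>"
    using GChoice by (auto intro!: mult_left_mono)
  then have "max (iv x1 \<sigma> * ert C1 g \<sigma>) (iv x3 \<sigma> * ert C2 g \<sigma>) \<le> max (iv x1 \<sigma> * ert C1 h \<sigma>) (iv x3 \<sigma> * ert C2 h \<sigma>)"
    by (rule max.mono)
  then show ?case by (simp only: ert.simps) (rule add_left_mono)
next
  case (PChoice C1 x2 C2)
  then show ?case by (auto intro!: add_mono mult_left_mono)
qed (auto simp: subst_def add_mono)

lemma awp_le_ert: "loop_free Q \<Longrightarrow> awp Q t \<sigma> \<le> ert Q t \<sigma>"
proof (induction Q arbitrary: t \<sigma>)
  case (Seq C1 C2)
  then have "awp C1 (awp C2 t) \<sigma> \<le> awp C1 (ert C2 t) \<sigma>" by (auto intro!: awp_mono)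
  also have "\<dots> \<le> ert C1 (ert C2 t) \<sigma>" using Seq by auto
  finally show ?case by simp
next
  case (GChoice x1 C1 x3 C2)
  then have "max (iv x1 \<sigma> * awp C1 t \<sigma>) (iv x3 \<sigma> * awp C2 t \<sigma>)
     \<le> max (iv x1 \<sigma> * ert C1 t \<sigma>) (iv x3 \<sigma> * ert C2 t \<sigma>)"
    by (intro max.mono mult_left_mono) auto
  also have "\<dots> \<le> 1 + \<dots>" by (rule add_increasing) auto
  finally show ?case by (simp only: awp.simps ert.simps)
next
  case (PChoice C1 p C2)
  then have "ennreal (p \<sigma>) * awp C1 t \<sigma> + ennreal (1 - p \<sigma>) * awp C2 t \<sigma>
    \<le> ennreal (p \<sigma>) * ert C1 t \<sigma> + ennreal (1 - p \<sigma>) * ert C2 t \<sigma>"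
    by (auto intro!: add_mono mult_left_mono)
  also have "\<dots> \<le> 1 + \<dots>" by simp
  finally show ?case by (simp add: add.assoc)
next
  case Skip then show ?case by simp
next
  case (Assign x E) then show ?case by simp
qed auto

lemma lin_awp: "wf Q \<Longrightarrow> loop_free Q \<Longrightarrow> lin Q I I = awp Q I"
proof (induction Q arbitrary: I)
  case (GChoice p1 C1 p2 C2)
  show ?case
  proof
    fix \<sigma>
    have c: "p1 \<sigma> \<or> p2 \<sigma>" using GChoice.prems by auto
    show "lin (GChoice p1 C1 p2 C2) I I \<sigma> = awp (GChoice p1 C1 p2 C2) I \<sigma>"
      using GChoice c by (auto simp: iv_def max_def)
  qed
qed auto

lemma lin_le_awp: "wf Q \<Longrightarrow> loop_free Q \<Longrightarrow> lin Q I g \<sigma> \<le> awp Q g \<sigma>"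
proof (induction Q arbitrary: I g \<sigma>)
  case (Seq C1 C2)
  then have "lin C1 (awp C2 I) (lin C2 I g) \<sigma> \<le> awp C1 (lin C2 I g) \<sigma>" by auto
  also have "\<dots> \<le> awp C1 (awp C2 g) \<sigma>" using Seq by (auto intro!: awp_mono)
  finally show ?case by simp
next
  case (GChoice p1 C1 p2 C2)
  have c: "p1 \<sigma> \<or> p2 \<sigma>" using GChoice.prems by auto
  show ?case using GChoice c
    by (auto simp: iv_def le_max_iff_disj)
next
  case (PChoice C1 x2 C2)
  then show ?case by (auto intro!: add_mono mult_left_mono)
qed auto

lemma lin_one: "wf Q \<Longrightarrow> loop_free Q \<Longrightarrow> lin Q I (\<lambda>_. 1) = (\<lambda>_. 1)"
proof (induction Q arbitrary: I)
  case (Seq C1 C2)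
  then show ?case by simp
next
  case (Assign x E) then show ?case by (simp add: subst_def)
next
  case (PChoice C1 p C2)
  show ?case
  proof
    fix \<sigma>
    have "0 \<le> p \<sigma>" "p \<sigma> \<le> 1" using PChoice.prems by auto
    then have "ennreal (p \<sigma>) + ennreal (1 - p \<sigma>) = 1"
      by (simp add: ennreal_plus[symmetric] del: ennreal_plus)
    then show "lin (PChoice C1 p C2) I (\<lambda>_. 1) \<sigma> = 1" using PChoice by simp
  qed
qed auto

definition rep :: "(expectation \<Rightarrow> expectation) \<Rightarrow> bool" where
  "rep L \<longleftrightarrow> (\<forall>\<sigma>. \<exists>S w. finite S \<and> (\<forall>\<tau>. w \<tau> < top) \<and> (\<forall>g. L g \<sigma> = (\<Sum>\<tau>\<in>S. w \<tau> * g \<tau>)))"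

lemma lin_rep: "loop_free Q \<Longrightarrow> \<exists>S w. finite S \<and> (\<forall>\<tau>. w \<tau> < top) \<and> (\<forall>\<tau>. \<tau> \<notin> S \<longrightarrow> w \<tau> = 0)
   \<and> (\<forall>g. lin Q I g \<sigma> = (\<Sum>\<tau>\<in>S. w \<tau> * g \<tau>))"
proof (induction Q arbitrary: I \<sigma>)
  case Skip
  show ?case
    by (rule exI[of _ "{\<sigma>}"], rule exI[of _ "\<lambda>\<tau>. if \<tau> = \<sigma> then 1 else 0"]) auto
next
  case (Assign x E)
  show ?case
    by (rule exI[of _ "{upd \<sigma> x (E \<sigma>)}"], rule exI[of _ "\<lambda>\<tau>. if \<tau> = upd \<sigma> x (E \<sigma>) then 1 else 0"])
      (auto simp: subst_def)
next
  case (Seq C1 C2)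
  obtain S1 w1 where 1: "finite S1" "\<forall>\<tau>. w1 \<tau> < top" "\<forall>\<tau>. \<tau> \<notin> S1 \<longrightarrow> w1 \<tau> = 0"
    "\<forall>g. lin C1 (awp C2 I) g \<sigma> = (\<Sum>\<tau>\<in>S1. w1 \<tau> * g \<tau>)"
    using Seq.IH(1)[of "awp C2 I" \<sigma>] Seq.prems by auto
  have "\<forall>\<tau>. \<exists>S w. finite S \<and> (\<forall>\<tau>. w \<tau> < top) \<and> (\<forall>\<tau>. \<tau> \<notin> S \<longrightarrow> w \<tau> = 0)
   \<and> (\<forall>g. lin C2 I g \<tau> = (\<Sum>\<tau>\<in>S. w \<tau> * g \<tau>))" using Seq.IH(2) Seq.prems by auto
  then obtain S2 w2 where 2: "\<And>\<tau>. finite (S2 \<tau>)" "\<And>\<tau> \<tau>'. w2 \<tau> \<tau>' < top"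
     "\<And>\<tau> \<tau>'. \<tau>' \<notin> S2 \<tau> \<Longrightarrow> w2 \<tau> \<tau>' = 0"
     "\<And>\<tau> g. lin C2 I g \<tau> = (\<Sum>\<tau>'\<in>S2 \<tau>. w2 \<tau> \<tau>' * g \<tau>')"
    by metis
  define U where "U = \<Union> (S2 ` S1)"
  have fU: "finite U" using 1 2 by (auto simp: U_def)
  have sub: "\<And>\<tau>. \<tau> \<in> S1 \<Longrightarrow> S2 \<tau> \<subseteq> U" by (auto simp: U_def)
  show ?case
  proof (intro exI conjI allI impI)
    show "finite U" by fact
    fix \<tau>' show "(\<Sum>\<tau>\<in>S1. w1 \<tau> * w2 \<tau> \<tau>') < top" using 1 2 by (simp add: ennreal_mult_less_top)
  next
    fix \<tau>' assume "\<tau>' \<notin> U"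
    then show "(\<Sum>\<tau>\<in>S1. w1 \<tau> * w2 \<tau> \<tau>') = 0" using 2 by (auto simp: U_def)
  next
    fix g
    have "lin (Seq C1 C2) I g \<sigma> = (\<Sum>\<tau>\<in>S1. w1 \<tau> * (\<Sum>\<tau>'\<in>S2 \<tau>. w2 \<tau> \<tau>' * g \<tau>'))"
      using 1 2 by simp
    also have "\<dots> = (\<Sum>\<tau>\<in>S1. w1 \<tau> * (\<Sum>\<tau>'\<in>U. w2 \<tau> \<tau>' * g \<tau>'))"
    proof (rule sum.cong[OF refl])
      fix \<tau> assume "\<tau> \<in> S1"
      then have "(\<Sum>\<tau>'\<in>S2 \<tau>. w2 \<tau> \<tau>' * g \<tau>') = (\<Sum>\<tau>'\<in>U. w2 \<tau> \<tau>' * g \<tau>')"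
        using sub 2 fU by (intro sum.mono_neutral_left) auto
      then show "w1 \<tau> * (\<Sum>\<tau>'\<in>S2 \<tau>. w2 \<tau> \<tau>' * g \<tau>') = w1 \<tau> * (\<Sum>\<tau>'\<in>U. w2 \<tau> \<tau>' * g \<tau>')" by simp
    qed
    also have "\<dots> = (\<Sum>\<tau>'\<in>U. (\<Sum>\<tau>\<in>S1. w1 \<tau> * w2 \<tau> \<tau>') * g \<tau>')"
      by (simp add: sum_distrib_left sum_distrib_right mult.assoc sum.swap[of _ S1])
    finally show "lin (Seq C1 C2) I g \<sigma> = (\<Sum>\<tau>'\<in>U. (\<Sum>\<tau>\<in>S1. w1 \<tau> * w2 \<tau> \<tau>') * g \<tau>')" .
  qed
next
  case (GChoice p1 C1 p2 C2)
  obtain S1 w1 where 1: "finite S1" "\<forall>\<tau>. w1 \<tau> < top" "\<forall>\<tau>. \<tau> \<notin> S1 \<longrightarrow> w1 \<tau> = 0"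
    "\<forall>g. lin C1 I g \<sigma> = (\<Sum>\<tau>\<in>S1. w1 \<tau> * g \<tau>)"
    using GChoice.IH(1)[of I \<sigma>] GChoice.prems by auto
  obtain S2 w2 where 2: "finite S2" "\<forall>\<tau>. w2 \<tau> < top" "\<forall>\<tau>. \<tau> \<notin> S2 \<longrightarrow> w2 \<tau> = 0"
    "\<forall>g. lin C2 I g \<sigma> = (\<Sum>\<tau>\<in>S2. w2 \<tau> * g \<tau>)"
    using GChoice.IH(2)[of I \<sigma>] GChoice.prems by auto
  show ?case
  proof (cases "p1 \<sigma> \<and> (p2 \<sigma> \<longrightarrow> awp C2 I \<sigma> \<le> awp C1 I \<sigma>)")
    case True
    then show ?thesis using 1 by (intro exI[of _ S1] exI[of _ w1]) auto
  next
    case False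
    then show ?thesis using 2 by (intro exI[of _ S2] exI[of _ w2]) auto
  qed
next
  case (PChoice C1 p C2)
  obtain S1 w1 where 1: "finite S1" "\<forall>\<tau>. w1 \<tau> < top" "\<forall>\<tau>. \<tau> \<notin> S1 \<longrightarrow> w1 \<tau> = 0"
    "\<forall>g. lin C1 I g \<sigma> = (\<Sum>\<tau>\<in>S1. w1 \<tau> * g \<tau>)"
    using PChoice.IH(1)[of I \<sigma>] PChoice.prems by auto
  obtain S2 w2 where 2: "finite S2" "\<forall>\<tau>. w2 \<tau> < top" "\<forall>\<tau>. \<tau> \<notin> S2 \<longrightarrow> w2 \<tau> = 0"
    "\<forall>g. lin C2 I g \<sigma> = (\<Sum>\<tau>\<in>S2. w2 \<tau> * g \<tau>)"
    using PChoice.IH(2)[of I \<sigma>] PChoice.prems by auto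
  show ?case
  proof (intro exI conjI allI impI)
    show "finite (S1 \<union> S2)" using 1 2 by simp
    fix \<tau> show "ennreal (p \<sigma>) * w1 \<tau> + ennreal (1 - p \<sigma>) * w2 \<tau> < top"
      using 1 2 by (simp add: ennreal_mult_less_top)
  next
    fix \<tau> assume "\<tau> \<notin> S1 \<union> S2"
    then show "ennreal (p \<sigma>) * w1 \<tau> + ennreal (1 - p \<sigma>) * w2 \<tau> = 0" using 1 2 by auto
  next
    fix g
    have a: "(\<Sum>\<tau>\<in>S1. w1 \<tau> * g \<tau>) = (\<Sum>\<tau>\<in>S1 \<union> S2. w1 \<tau> * g \<tau>)"
      using 1 2 by (intro sum.mono_neutral_left) auto
    have b: "(\<Sum>\<tau>\<in>S2. w2 \<tau> * g \<tau>) = (\<Sum>\<tau>\<in>S1 \<union> S2. w2 \<tau> * g \<tau>)"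
      using 1 2 by (intro sum.mono_neutral_left) auto
    show "lin (PChoice C1 p C2) I g \<sigma> =
      (\<Sum>\<tau>\<in>S1 \<union> S2. (ennreal (p \<sigma>) * w1 \<tau> + ennreal (1 - p \<sigma>) * w2 \<tau>) * g \<tau>)"
      using 1 2 by (simp add: a b sum_distrib_left distrib_right sum.distrib mult.assoc)
  qed
qed simp

lemma enn2real_sum_fin: "(\<And>i. i \<in> A \<Longrightarrow> f i < top) \<Longrightarrow> enn2real (sum f A) = (\<Sum>i\<in>A. enn2real (f i))"
proof (induction A rule: infinite_finite_induct)
  case (insert x F)
  have "f x < top" "sum f F < top" using insert by auto
  then obtain a c where "f x = ennreal a" "sum f F = ennreal c" "a \<ge> 0" "c \<ge> 0"
    unfolding less_top_ennreal by blast
  then have "enn2real (f x + sum f F) = enn2real (f x) + enn2real (sum f F)"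
    by (simp flip: ennreal_plus)
  then show ?case using insert by simp
qed auto

lemma rep_mono: "rep L \<Longrightarrow> (\<And>\<tau>. g \<tau> \<le> h \<tau>) \<Longrightarrow> L g \<sigma> \<le> L h \<sigma>"
proof -
  assume r: "rep L" and gh: "\<And>\<tau>. g \<tau> \<le> h \<tau>"
  obtain S w where "\<forall>g. L g \<sigma> = (\<Sum>\<tau>\<in>S. w \<tau> * g \<tau>)" using r unfolding rep_def by blast
  then show ?thesis using gh by (auto intro!: sum_mono mult_left_mono)
qed

lemma rep_add: "rep L \<Longrightarrow> L (\<lambda>\<tau>. g \<tau> + h \<tau>) \<sigma> = L g \<sigma> + L h \<sigma>"
proof -
  assume r: "rep L"
  obtain S w where "\<forall>g. L g \<sigma> = (\<Sum>\<tau>\<in>S. w \<tau> * g \<tau>)" using r unfolding rep_def by blast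
  then show ?thesis by (simp add: distrib_left sum.distrib)
qed

lemma rep_sum: "rep L \<Longrightarrow> L (\<lambda>\<tau>. \<Sum>i\<in>A. g i \<tau>) \<sigma> = (\<Sum>i\<in>A. L (g i) \<sigma>)"
proof -
  assume r: "rep L"
  obtain S w where "\<forall>g. L g \<sigma> = (\<Sum>\<tau>\<in>S. w \<tau> * g \<tau>)" using r unfolding rep_def by blast
  then show ?thesis by (simp add: sum_distrib_left sum.swap[of _ A])
qed

lemma rep_hom: "rep L \<Longrightarrow> L (\<lambda>\<tau>. c * g \<tau>) \<sigma> = c * L g \<sigma>"
proof -
  assume r: "rep L"
  obtain S w where "\<forall>g. L g \<sigma> = (\<Sum>\<tau>\<in>S. w \<tau> * g \<tau>)" using r unfolding rep_def by blast
  then show ?thesis by (simp add: sum_distrib_left mult.left_commute)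
qed

lemma rep_tendsto: "rep L \<Longrightarrow> (\<And>\<tau>. (\<lambda>m. g m \<tau>) \<longlonglongrightarrow> 0) \<Longrightarrow> (\<lambda>m. L (g m) \<sigma>) \<longlonglongrightarrow> 0"
proof -
  assume r: "rep L" and lim: "\<And>\<tau>. (\<lambda>m. g m \<tau>) \<longlonglongrightarrow> 0"
  obtain S w where w: "\<forall>\<tau>. w \<tau> < top" "\<forall>g. L g \<sigma> = (\<Sum>\<tau>\<in>S. w \<tau> * g \<tau>)"
    using r unfolding rep_def by blast
  have "(\<lambda>m. \<Sum>\<tau>\<in>S. w \<tau> * g m \<tau>) \<longlonglongrightarrow> (\<Sum>\<tau>\<in>S. w \<tau> * 0)"
    by (intro tendsto_sum ennreal_tendsto_cmult lim) (use w in auto)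
  then show ?thesis using w by simp
qed

lemma pow_mono: "rep L \<Longrightarrow> (\<And>\<tau>. g \<tau> \<le> h \<tau>) \<Longrightarrow> (L^^k) g \<sigma> \<le> (L^^k) h \<sigma>"
proof (induction k arbitrary: \<sigma>)
  case (Suc k)
  then show ?case by (simp add: rep_mono)
qed simp

lemma pow_hom: "rep L \<Longrightarrow> (L^^k) (\<lambda>\<tau>. c * g \<tau>) = (\<lambda>\<sigma>. c * (L^^k) g \<sigma>)"
proof (induction k)
  case (Suc k)
  then show ?case by (simp add: rep_hom)
qed simp

lemma pow_tendsto: "rep L \<Longrightarrow> (\<And>\<tau>. (\<lambda>m. g m \<tau>) \<longlonglongrightarrow> 0) \<Longrightarrow> (\<lambda>m. (L^^k) (g m) \<sigma>) \<longlonglongrightarrow> 0"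
proof (induction k arbitrary: g \<sigma>)
  case 0
  then show ?case by simp
next
  case (Suc k)
  have "(\<lambda>m. (L^^k) (L (g m)) \<sigma>) \<longlonglongrightarrow> 0"
    using Suc.IH[of "\<lambda>m. L (g m)"] Suc.prems rep_tendsto by blast
  then show ?case by (simp add: funpow_Suc_right del: funpow.simps)
qed

theorem theorem6p10:
  fixes \<phi> :: pred and Cb :: pgcl and I f :: expectation
  assumes wf: "wf (While \<phi> Cb I)"
    and lf: "loop_free Cb"
    and h1: "\<forall>\<sigma>. I \<sigma> \<le> iv \<phi> \<sigma> * awp Cb I \<sigma> + iv (\<lambda>s. \<not> \<phi> s) \<sigma> * f \<sigma>"
    and h2: "dPAST (While \<phi> Cb I)"
    and h3: "suitable_OST (While \<phi> Cb I) f"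
  shows "\<forall>\<sigma>. I \<sigma> \<le> awp (While \<phi> Cb I) f \<sigma>"
proof
  fix \<sigma>0
  obtain b where b0: "0 \<le> b"
    and hb: "\<forall>\<sigma>. iv \<phi> \<sigma> * awp Cb (\<lambda>\<tau>. ennreal \<bar>enn2real (I \<tau>) - enn2real (I \<sigma>)\<bar>) \<sigma> \<le> ennreal b"
    and Ifin: "\<forall>\<sigma>. I \<sigma> < \<infinity>"
    using h3 unfolding suitable_OST_def by auto
  have wfb: "wf Cb" using wf by simp
  have iv01: "\<And>P s. iv P s = 0 \<or> iv P s = 1" by (simp add: iv_def)
  have ivle: "\<And>P s. iv P s \<le> 1" by (simp add: iv_def)
  define L where "L = (\<lambda>g \<sigma>. iv \<phi> \<sigma> * lin Cb I g \<sigma>)"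
  have repL: "rep L"
    unfolding rep_def
  proof
    fix \<sigma>
    obtain S w where w: "finite S" "\<forall>\<tau>. w \<tau> < top" "\<forall>g. lin Cb I g \<sigma> = (\<Sum>\<tau>\<in>S. w \<tau> * g \<tau>)"
      using lin_rep[OF lf, of I \<sigma>] by blast
    show "\<exists>S w. finite S \<and> (\<forall>\<tau>. w \<tau> < top) \<and> (\<forall>g. L g \<sigma> = (\<Sum>\<tau>\<in>S. w \<tau> * g \<tau>))"
    proof (intro exI conjI allI)
      show "finite S" by fact
      fix \<tau> show "iv \<phi> \<sigma> * w \<tau> < top" using w iv01[of \<phi> \<sigma>] by auto
    next
      fix g show "L g \<sigma> = (\<Sum>\<tau>\<in>S. iv \<phi> \<sigma> * w \<tau> * g \<tau>)"
        using w by (simp add: L_def sum_distrib_left mult.assoc)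
    qed
  qed
  have L_awp: "\<And>g \<sigma>. L g \<sigma> \<le> iv \<phi> \<sigma> * awp Cb g \<sigma>"
    unfolding L_def by (intro mult_left_mono lin_le_awp wfb lf) auto
  have LI: "\<And>\<sigma>. L I \<sigma> = iv \<phi> \<sigma> * awp Cb I \<sigma>"
    unfolding L_def using lin_awp[OF wfb lf] by simp
  have L1: "\<And>\<sigma>. L (\<lambda>_. 1) \<sigma> \<le> 1"
    unfolding L_def using lin_one[OF wfb lf] ivle by simp
  define \<Phi> where "\<Phi> = (\<lambda>g \<sigma>. iv (\<lambda>s. \<not> \<phi> s) \<sigma> * f \<sigma> + iv \<phi> \<sigma> * awp Cb g \<sigma>)"
  have mono\<Phi>: "mono \<Phi>"
    unfolding \<Phi>_def
    by (intro monoI le_funI add_left_mono mult_left_mono awp_mono[OF lf]) (auto dest: le_funD)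
  have awpW: "awp (While \<phi> Cb I) f = lfp \<Phi>" by (simp add: \<Phi>_def)
  have \<Phi>le: "\<And>n. (\<Phi>^^n) bot \<le> lfp \<Phi>"
  proof -
    fix n show "(\<Phi>^^n) bot \<le> lfp \<Phi>"
    proof (induction n)
      case (Suc n)
      have "(\<Phi>^^Suc n) bot = \<Phi> ((\<Phi>^^n) bot)" by simp
      also have "\<dots> \<le> \<Phi> (lfp \<Phi>)" using Suc by (rule monoD[OF mono\<Phi>])
      also have "\<dots> = lfp \<Phi>" using lfp_unfold[OF mono\<Phi>] by simp
      finally show ?case .
    qed (simp add: le_fun_def)
  qed
  have step1: "\<And>\<sigma>. I \<sigma> \<le> (\<Phi>^^n) bot \<sigma> + (L^^n) I \<sigma>" for n
  proof (induction n)
    case 0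
    then show ?case by simp
  next
    case (Suc n)
    fix \<sigma>
    have "I \<sigma> \<le> L I \<sigma> + iv (\<lambda>s. \<not> \<phi> s) \<sigma> * f \<sigma>" using h1 LI by simp
    also have "L I \<sigma> \<le> L (\<lambda>\<tau>. (\<Phi>^^n) bot \<tau> + (L^^n) I \<tau>) \<sigma>"
      by (rule rep_mono[OF repL]) (rule Suc.IH)
    also have "\<dots> = L ((\<Phi>^^n) bot) \<sigma> + (L^^Suc n) I \<sigma>"
      by (simp add: rep_add[OF repL])
    also have "L ((\<Phi>^^n) bot) \<sigma> \<le> iv \<phi> \<sigma> * awp Cb ((\<Phi>^^n) bot) \<sigma>" by (rule L_awp)
    finally show "I \<sigma> \<le> (\<Phi>^^Suc n) bot \<sigma> + (L^^Suc n) I \<sigma>"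
      by (simp add: \<Phi>_def add_mono algebra_simps)
  qed
  define G where "G = (\<lambda>X \<sigma>. 1 + iv (\<lambda>s. \<not> \<phi> s) \<sigma> * (0::ennreal) + iv \<phi> \<sigma> * ert Cb X \<sigma>)"
  define R where "R = lfp G"
  have monoG: "mono G"
    unfolding G_def
    by (intro monoI le_funI add_left_mono mult_left_mono ert_mono[OF lf]) (auto dest: le_funD)
  have Rfin: "\<And>\<sigma>. R \<sigma> < \<infinity>"
    using h2 unfolding dPAST_def R_def G_def by simp
  have Rfix: "\<And>\<sigma>. 1 + L R \<sigma> \<le> R \<sigma>"
  proof -
    fix \<sigma>
    have "R \<sigma> = G R \<sigma>" using lfp_unfold[OF monoG] unfolding R_def by metis
    also have "\<dots> = 1 + iv \<phi> \<sigma> * ert Cb R \<sigma>" by (simp add: G_def)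
    finally have e: "R \<sigma> = 1 + iv \<phi> \<sigma> * ert Cb R \<sigma>" .
    have "L R \<sigma> \<le> iv \<phi> \<sigma> * awp Cb R \<sigma>" by (rule L_awp)
    also have "\<dots> \<le> iv \<phi> \<sigma> * ert Cb R \<sigma>" by (intro mult_left_mono awp_le_ert lf) auto
    finally show "1 + L R \<sigma> \<le> R \<sigma>" using e by (simp add: add_left_mono)
  qed
  define u where "u = (\<lambda>m. (L^^m) (\<lambda>_. 1))"
  have uSuc: "\<And>m. u (Suc m) = L (u m)" by (simp add: u_def)
  have u_le1: "\<And>\<sigma>. u m \<sigma> \<le> 1" for m
  proof (induction m)
    case (Suc m)
    fix \<sigma>
    have "u (Suc m) \<sigma> \<le> L (\<lambda>_. 1) \<sigma>" unfolding uSuc by (rule rep_mono[OF repL]) (rule Suc.IH)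
    then show "u (Suc m) \<sigma> \<le> 1" using L1 order_trans by blast
  qed (simp add: u_def)
  have u_fin: "\<And>m \<sigma>. u m \<sigma> < top"
    using u_le1 by (metis ennreal_one_less_top le_less_trans)
  have u_sum: "\<And>\<sigma>. (\<Sum>k<n. u k \<sigma>) \<le> R \<sigma>" for n
  proof (induction n)
    case 0 then show ?case by simp
  next
    case (Suc n)
    fix \<sigma>
    have "(\<Sum>k<Suc n. u k \<sigma>) = u 0 \<sigma> + (\<Sum>k<n. u (Suc k) \<sigma>)" by (rule sum.lessThan_Suc_shift)
    also have "\<dots> = 1 + L (\<lambda>\<tau>. \<Sum>k<n. u k \<tau>) \<sigma>"
      by (simp add: uSuc rep_sum[OF repL]) (simp add: u_def)
    also have "\<dots> \<le> 1 + L R \<sigma>" by (intro add_left_mono rep_mono[OF repL] Suc.IH)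
    also have "\<dots> \<le> R \<sigma>" by (rule Rfix)
    finally show "(\<Sum>k<Suc n. u k \<sigma>) \<le> R \<sigma>" .
  qed
  have u_summable: "\<And>\<sigma>. summable (\<lambda>k. enn2real (u k \<sigma>))"
  proof -
    fix \<sigma>
    show "summable (\<lambda>k. enn2real (u k \<sigma>))"
    proof (rule summableI_nonneg_bounded[where x="enn2real (R \<sigma>)"])
      fix n
      have "(\<Sum>i<n. enn2real (u i \<sigma>)) = enn2real (\<Sum>i<n. u i \<sigma>)"
        using u_fin by (simp add: enn2real_sum_fin)
      also have "\<dots> \<le> enn2real (R \<sigma>)" using u_sum Rfin by (intro enn2real_mono) auto
      finally show "(\<Sum>i<n. enn2real (u i \<sigma>)) \<le> enn2real (R \<sigma>)" .
    qed simp
  qed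
  have u_lim: "\<And>\<sigma>. (\<lambda>m. u m \<sigma>) \<longlonglongrightarrow> 0"
  proof -
    fix \<sigma>
    have "(\<lambda>k. enn2real (u k \<sigma>)) \<longlonglongrightarrow> 0" using u_summable by (rule summable_LIMSEQ_zero)
    then have "(\<lambda>k. ennreal (enn2real (u k \<sigma>))) \<longlonglongrightarrow> ennreal 0" by (rule tendsto_ennrealI)
    then show "(\<lambda>m. u m \<sigma>) \<longlonglongrightarrow> 0" using u_fin by (simp add: ennreal_enn2real)
  qed
  define D where "D = (\<lambda>\<sigma> \<tau>. ennreal \<bar>enn2real (I \<tau>) - enn2real (I \<sigma>)\<bar>)"
  define K where "K = (\<lambda>m \<sigma>. L (\<lambda>\<tau>. D \<sigma> \<tau> * u m \<tau>) \<sigma>)"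
  define A where "A = (\<lambda>n \<sigma>. \<Sum>k<n. (L^^k) (K (n - Suc k)) \<sigma>)"
  have ID: "\<And>\<sigma> \<tau>. I \<tau> \<le> I \<sigma> + D \<sigma> \<tau>"
  proof -
    fix \<sigma> \<tau>
    have "I \<tau> = ennreal (enn2real (I \<tau>))" "I \<sigma> = ennreal (enn2real (I \<sigma>))"
      using Ifin by (auto simp: ennreal_enn2real)
    moreover have "ennreal (enn2real (I \<tau>)) \<le> ennreal (enn2real (I \<sigma>) + \<bar>enn2real (I \<tau>) - enn2real (I \<sigma>)\<bar>)"
      by (intro ennreal_leI) auto
    ultimately show "I \<tau> \<le> I \<sigma> + D \<sigma> \<tau>" unfolding D_def
      by (metis enn2real_nonneg abs_ge_zero ennreal_plus)
  qed
  have stepA: "\<And>\<sigma>. (L^^n) I \<sigma> \<le> I \<sigma> * u n \<sigma> + A n \<sigma>" for n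
  proof (induction n)
    case 0 then show ?case by (simp add: u_def A_def)
  next
    case (Suc n)
    fix \<sigma>
    have "(L^^Suc n) I \<sigma> = L ((L^^n) I) \<sigma>" by simp
    also have "\<dots> \<le> L (\<lambda>\<tau>. I \<tau> * u n \<tau> + A n \<tau>) \<sigma>" by (rule rep_mono[OF repL]) (rule Suc.IH)
    also have "\<dots> = L (\<lambda>\<tau>. I \<tau> * u n \<tau>) \<sigma> + L (A n) \<sigma>" by (rule rep_add[OF repL])
    also have "L (\<lambda>\<tau>. I \<tau> * u n \<tau>) \<sigma> \<le> L (\<lambda>\<tau>. I \<sigma> * u n \<tau> + D \<sigma> \<tau> * u n \<tau>) \<sigma>"
      by (rule rep_mono[OF repL]) (metis ID distrib_right mult_right_mono zero_le)
    also have "\<dots> = I \<sigma> * u (Suc n) \<sigma> + K n \<sigma>"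
      by (simp add: rep_add[OF repL] rep_hom[OF repL] uSuc K_def)
    also have "L (A n) \<sigma> = (\<Sum>k<n. (L^^Suc k) (K (n - Suc k)) \<sigma>)"
      unfolding A_def by (simp add: rep_sum[OF repL])
    finally have "(L^^Suc n) I \<sigma> \<le> I \<sigma> * u (Suc n) \<sigma> + (K n \<sigma> + (\<Sum>k<n. (L^^Suc k) (K (n - Suc k)) \<sigma>))"
      by (simp add: add.assoc)
    also have "K n \<sigma> + (\<Sum>k<n. (L^^Suc k) (K (n - Suc k)) \<sigma>) = A (Suc n) \<sigma>"
      unfolding A_def by (subst sum.lessThan_Suc_shift) simp
    finally show "(L^^Suc n) I \<sigma> \<le> I \<sigma> * u (Suc n) \<sigma> + A (Suc n) \<sigma>" .
  qed
  have K_le: "\<And>m \<sigma>. K m \<sigma> \<le> ennreal b"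
  proof -
    fix m \<sigma>
    have "K m \<sigma> \<le> L (D \<sigma>) \<sigma>" unfolding K_def
      by (rule rep_mono[OF repL]) (metis u_le1 mult_left_mono mult.right_neutral zero_le)
    also have "\<dots> \<le> iv \<phi> \<sigma> * awp Cb (D \<sigma>) \<sigma>" by (rule L_awp)
    also have "\<dots> \<le> ennreal b" using hb unfolding D_def by blast
    finally show "K m \<sigma> \<le> ennreal b" .
  qed
  have K_lim: "\<And>\<sigma>. (\<lambda>m. K m \<sigma>) \<longlonglongrightarrow> 0"
  proof -
    fix \<sigma>
    have "\<And>\<tau>. (\<lambda>m. D \<sigma> \<tau> * u m \<tau>) \<longlonglongrightarrow> 0"
      using ennreal_tendsto_cmult[OF _ u_lim, of "D \<sigma> _"] by (simp add: D_def)
    then show "(\<lambda>m. K m \<sigma>) \<longlonglongrightarrow> 0" unfolding K_def by (rule rep_tendsto[OF repL])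
  qed
  have F_le: "\<And>k m \<sigma>. (L^^k) (K m) \<sigma> \<le> ennreal b * u k \<sigma>"
  proof -
    fix k m \<sigma>
    have "(L^^k) (K m) \<sigma> \<le> (L^^k) (\<lambda>\<tau>. ennreal b * 1) \<sigma>"
      by (rule pow_mono[OF repL]) (simp add: K_le)
    also have "\<dots> = ennreal b * u k \<sigma>" by (simp only: pow_hom[OF repL] u_def)
    finally show "(L^^k) (K m) \<sigma> \<le> ennreal b * u k \<sigma>" .
  qed
  have F_fin: "\<And>k m \<sigma>. (L^^k) (K m) \<sigma> < top"
    using F_le u_fin by (metis ennreal_less_top ennreal_mult_less_top le_less_trans)
  have F_lim: "\<And>k \<sigma>. (\<lambda>m. (L^^k) (K m) \<sigma>) \<longlonglongrightarrow> 0"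
    by (rule pow_tendsto[OF repL]) (rule K_lim)
  define a where "a = (\<lambda>k n. enn2real (if k < n then (L^^k) (K (n - Suc k)) \<sigma>0 else 0))"
  define M where "M = (\<lambda>k. b * enn2real (u k \<sigma>0))"
  have tann: "eventually (\<lambda>n. summable (\<lambda>k. norm (a k n))) sequentially \<and>
           summable (\<lambda>n. norm ((\<lambda>_. 0::real) n)) \<and>
           ((\<lambda>n. suminf (\<lambda>k. a k n)) \<longlonglongrightarrow> suminf (\<lambda>_. 0::real))"
  proof (rule tannerys_theorem)
    fix k
    have "(\<lambda>m. (L^^k) (K m) \<sigma>0) \<longlonglongrightarrow> ennreal 0" using F_lim by simp
    from tendsto_enn2real[OF this]
    have "(\<lambda>m. enn2real ((L^^k) (K m) \<sigma>0)) \<longlonglongrightarrow> 0" by simp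
    then have "(\<lambda>n. a k (n + Suc k)) \<longlonglongrightarrow> 0" by (simp add: a_def)
    then show "(\<lambda>n. a k n) \<longlonglongrightarrow> 0" by (rule LIMSEQ_offset)
  next
    show "eventually (\<lambda>(k,n). norm (a k n) \<le> M k) (at_top \<times>\<^sub>F sequentially)"
    proof (rule always_eventually, clarify)
      fix k n
      have "enn2real ((L^^k) (K (n - Suc k)) \<sigma>0) \<le> enn2real (ennreal b * u k \<sigma>0)"
        using F_le u_fin by (intro enn2real_mono) (auto simp: ennreal_mult_less_top)
      also have "\<dots> = M k" using b0 by (simp add: M_def enn2real_mult)
      finally show "norm (a k n) \<le> M k" using b0 by (simp add: a_def M_def)
    qed
  next
    show "summable M" unfolding M_def by (intro summable_mult u_summable)
  qed simp
  have A_eq: "\<And>n. suminf (\<lambda>k. a k n) = enn2real (A n \<sigma>0)"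
  proof -
    fix n
    have "suminf (\<lambda>k. a k n) = (\<Sum>k<n. a k n)" by (rule suminf_finite) (auto simp: a_def)
    also have "\<dots> = enn2real (A n \<sigma>0)" unfolding A_def using F_fin
      by (simp add: a_def enn2real_sum_fin)
    finally show "suminf (\<lambda>k. a k n) = enn2real (A n \<sigma>0)" .
  qed
  have A_fin: "\<And>n. A n \<sigma>0 < top" unfolding A_def using F_fin by simp
  have A_lim: "(\<lambda>n. A n \<sigma>0) \<longlonglongrightarrow> 0"
  proof -
    have "(\<lambda>n. enn2real (A n \<sigma>0)) \<longlonglongrightarrow> 0" using tann A_eq by simp
    then have "(\<lambda>n. ennreal (enn2real (A n \<sigma>0))) \<longlonglongrightarrow> ennreal 0" by (rule tendsto_ennrealI)
    then show ?thesis using A_fin by (simp add: ennreal_enn2real)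
  qed
  have B_lim: "(\<lambda>n. I \<sigma>0 * u n \<sigma>0 + A n \<sigma>0) \<longlonglongrightarrow> I \<sigma>0 * 0 + 0"
    by (intro tendsto_add ennreal_tendsto_cmult u_lim A_lim) (use Ifin in auto)
  have LI_lim: "(\<lambda>n. (L^^n) I \<sigma>0) \<longlonglongrightarrow> 0"
    by (rule tendsto_sandwich[of "\<lambda>_. 0" _ _ "\<lambda>n. I \<sigma>0 * u n \<sigma>0 + A n \<sigma>0"])
       (use stepA B_lim in auto)
  have "(\<lambda>n. lfp \<Phi> \<sigma>0 + (L^^n) I \<sigma>0) \<longlonglongrightarrow> lfp \<Phi> \<sigma>0 + 0"
    by (intro tendsto_add tendsto_const LI_lim)
  moreover have "\<forall>n. I \<sigma>0 \<le> lfp \<Phi> \<sigma>0 + (L^^n) I \<sigma>0"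
    using step1 \<Phi>le by (meson add_right_mono le_funD order_trans)
  ultimately have "I \<sigma>0 \<le> lfp \<Phi> \<sigma>0 + 0" by (intro LIMSEQ_le_const) auto
  then show "I \<sigma>0 \<le> awp (While \<phi> Cb I) f \<sigma>0" using awpW by simp
qed

end
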